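(* Let $k$ be a commutative ring, $B\to A$ a morphism of $k$-algebras, and let $t=\sum_is_i\otimes_Bt_i\in(A\otimes_BA)^B$ and $m,u\in A^B$ satisfy: (a) $\sum_is_it_i=1$ and $\sum_{i,j}s_i\otimes_Bt_is_j\otimes_Bt_j=\sum_is_i\otimes_B1\otimes_Bt_i$; (b) $tm=mt^2$; (c) $tu=u\otimes_B1$; (d) $m^2=\sum_ims_imt_i$; (e) $mu=\sum_ims_iut_i=1$. Let $(A\otimes_BA)_t$ denote the $A$-bimodule $A\otimes_BA$ equipped with $\Delta_t(a\otimes_Ba')=\sum_iams_i\otimes_Bt_i\otimes_Ba'$ (viewed in $(A\otimes_BA)\otimes_A(A\otimes_BA)\cong A\otimes_BA\otimes_BA$) and $e_t(a\otimes_Ba')=aua'$. Then the element $mt=\sum_ims_i\otimes_Bt_i$ is group-like in $(A\otimes_BA)_t$, i.e. $e_t(mt)=1$ and $\Delta_t(mt)=mt\otimes_Amt$.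
   Context: $A^B=\{a\in A\mid ba=ab\ \forall b\in B\}$ and $(A\otimes_BA)^B=\{x\in A\otimes_BA\mid bx=xb\ \forall b\in B\}$, using the natural $A$-bimodule structure of $A\otimes_BA$ (so e.g. $tm=\sum_is_i\otimes_Bt_im$ and $mt=\sum_ims_i\otimes_Bt_i$). The product on $(A\otimes_BA)^B$ is $(\sum_is_i\otimes_Bt_i)(\sum_js'_j\otimes_Bt'_j)=\sum_{i,j}s_is'_j\otimes_Bt'_jt_i$; in particular $t^2=\sum_{i,j}s_is_j\otimes_Bt_jt_i$. The isomorphism $(A\otimes_BA)\otimes_A(A\otimes_BA)\cong A\otimes_BA\otimes_BA$ is $a\otimes_Bb\otimes_Ac\otimes_Bd\mapsto a\otimes_Bbc\otimes_Bd$. *)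

theory Defs
  imports "HOL-Library.Poly_Mapping"
begin

definition is_ring_hom :: "('r::ring_1 \<Rightarrow> 's::ring_1) \<Rightarrow> bool" where
  "is_ring_hom g \<longleftrightarrow> g 1 = 1 \<and> (\<forall>x y. g (x + y) = g x + g y) \<and> (\<forall>x y. g (x * y) = g x * g y)"

definition is_alg_struct :: "('k::comm_ring_1 \<Rightarrow> 'r::ring_1) \<Rightarrow> bool" where
  "is_alg_struct \<iota> \<longleftrightarrow> is_ring_hom \<iota> \<and> (\<forall>c x. \<iota> c * x = x * \<iota> c)"

text \<open>Free abelian groups on A x A and A x A x A; generators a (x) c and a (x) b (x) c.\<close>
definition gen2 :: "'a \<Rightarrow> 'a \<Rightarrow> ('a \<times> 'a) \<Rightarrow>\<^sub>0 int" where
  "gen2 a c = Poly_Mapping.single (a, c) 1"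

definition gen3 :: "'a \<Rightarrow> 'a \<Rightarrow> 'a \<Rightarrow> ('a \<times> 'a \<times> 'a) \<Rightarrow>\<^sub>0 int" where
  "gen3 a b c = Poly_Mapping.single (a, b, c) 1"

text \<open>Relation subgroup defining A (x)_B A, where A is a B-bimodule via f : B -> A.\<close>
inductive_set tens2_rel :: "('b::ring_1 \<Rightarrow> 'a::ring_1) \<Rightarrow> (('a \<times> 'a) \<Rightarrow>\<^sub>0 int) set"
  for f where
  zero: "0 \<in> tens2_rel f"
| diff: "x \<in> tens2_rel f \<Longrightarrow> y \<in> tens2_rel f \<Longrightarrow> x - y \<in> tens2_rel f"
| addl: "gen2 (a + a') c - gen2 a c - gen2 a' c \<in> tens2_rel f"
| addr: "gen2 a (c + c') - gen2 a c - gen2 a c' \<in> tens2_rel f"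
| bal: "gen2 (a * f b) c - gen2 a (f b * c) \<in> tens2_rel f"

inductive_set tens3_rel :: "('b::ring_1 \<Rightarrow> 'a::ring_1) \<Rightarrow> (('a \<times> 'a \<times> 'a) \<Rightarrow>\<^sub>0 int) set"
  for f where
  zero: "0 \<in> tens3_rel f"
| diff: "x \<in> tens3_rel f \<Longrightarrow> y \<in> tens3_rel f \<Longrightarrow> x - y \<in> tens3_rel f"
| add1: "gen3 (a + a') c d - gen3 a c d - gen3 a' c d \<in> tens3_rel f"
| add2: "gen3 a (c + c') d - gen3 a c d - gen3 a c' d \<in> tens3_rel f"
| add3: "gen3 a c (d + d') - gen3 a c d - gen3 a c d' \<in> tens3_rel f"
| bal1: "gen3 (a * f b) c d - gen3 a (f b * c) d \<in> tens3_rel f"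
| bal2: "gen3 a (c * f b) d - gen3 a c (f b * d) \<in> tens3_rel f"

definition teq2 :: "('b::ring_1 \<Rightarrow> 'a::ring_1) \<Rightarrow> (('a \<times> 'a) \<Rightarrow>\<^sub>0 int) \<Rightarrow> (('a \<times> 'a) \<Rightarrow>\<^sub>0 int) \<Rightarrow> bool" where
  "teq2 f x y \<longleftrightarrow> x - y \<in> tens2_rel f"

definition teq3 :: "('b::ring_1 \<Rightarrow> 'a::ring_1) \<Rightarrow> (('a \<times> 'a \<times> 'a) \<Rightarrow>\<^sub>0 int) \<Rightarrow> (('a \<times> 'a \<times> 'a) \<Rightarrow>\<^sub>0 int) \<Rightarrow> bool" where
  "teq3 f x y \<longleftrightarrow> x - y \<in> tens3_rel f"

definition counit_t :: "'a::ring_1 \<Rightarrow> (('a \<times> 'a) \<Rightarrow>\<^sub>0 int) \<Rightarrow> 'a" where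
  "counit_t u X = (\<Sum>p\<in>Poly_Mapping.keys X. of_int (Poly_Mapping.lookup X p) * (fst p * u * snd p))"

text \<open>Comultiplication Delta_t(a (x) a') = sum_i a m s_i (x) t_i (x) a', with
  t = sum_{i<n} s_i (x) t_i, landing in A (x)_B A (x)_B A, extended additively.\<close>
definition comult_t :: "'a::ring_1 \<Rightarrow> nat \<Rightarrow> (nat \<Rightarrow> 'a) \<Rightarrow> (nat \<Rightarrow> 'a)
    \<Rightarrow> (('a \<times> 'a) \<Rightarrow>\<^sub>0 int) \<Rightarrow> (('a \<times> 'a \<times> 'a) \<Rightarrow>\<^sub>0 int)" where
  "comult_t m n s t X = (\<Sum>p\<in>Poly_Mapping.keys X. \<Sum>j<n.
      Poly_Mapping.single (fst p * m * s j, t j, snd p) (Poly_Mapping.lookup X p))"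

text \<open>x (x)_A y in (A (x)_B A) (x)_A (A (x)_B A) = A (x)_B A (x)_B A,
  via a (x) b (x) c (x) d |-> a (x) bc (x) d.\<close>
definition tensA :: "(('a::ring_1 \<times> 'a) \<Rightarrow>\<^sub>0 int) \<Rightarrow> (('a \<times> 'a) \<Rightarrow>\<^sub>0 int) \<Rightarrow> (('a \<times> 'a \<times> 'a) \<Rightarrow>\<^sub>0 int)" where
  "tensA X Y = (\<Sum>p\<in>Poly_Mapping.keys X. \<Sum>q\<in>Poly_Mapping.keys Y.
      Poly_Mapping.single (fst p, snd p * fst q, snd q) (Poly_Mapping.lookup X p * Poly_Mapping.lookup Y q))"

end

theory Submission
  imports Defs
begin


definition Lin :: "('p \<Rightarrow> int \<Rightarrow> 'v::ab_group_add) \<Rightarrow> ('p \<Rightarrow>\<^sub>0 int) \<Rightarrow> 'v" where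
  "Lin h X = (\<Sum>p\<in>Poly_Mapping.keys X. h p (Poly_Mapping.lookup X p))"

definition addh :: "('p \<Rightarrow> int \<Rightarrow> 'v::ab_group_add) \<Rightarrow> bool" where
  "addh h \<longleftrightarrow> (\<forall>p a b. h p (a + b) = h p a + h p b)"

lemma addh_0: "addh h \<Longrightarrow> h p 0 = 0"
  unfolding addh_def by (metis add_cancel_right_right add_0)

lemma Lin_add: "addh h \<Longrightarrow> Lin h (X + Y) = Lin h X + Lin h Y"
  unfolding Lin_def
  by (rule setsum_keys_plus_distrib) (auto simp: addh_0 addh_def)

lemma Lin_zero[simp]: "Lin h 0 = 0"
  by (simp add: Lin_def)

lemma Lin_diff: "addh h \<Longrightarrow> Lin h (X - Y) = Lin h X - Lin h Y"
  by (metis Lin_add add_diff_cancel diff_add_cancel)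

lemma Lin_single: "addh h \<Longrightarrow> Lin h (Poly_Mapping.single p c) = h p c"
  by (simp add: Lin_def addh_0)

lemma Lin_sum: "finite I \<Longrightarrow> addh h \<Longrightarrow> Lin h (\<Sum>i\<in>I. X i) = (\<Sum>i\<in>I. Lin h (X i))"
  by (induction I rule: finite_induct) (auto simp: Lin_add)

lemma Lin_hadd: "Lin (\<lambda>p c. h1 p c + h2 p c) X = Lin h1 X + Lin h2 X"
  by (simp add: Lin_def sum.distrib)

lemma Lin_hsum: "Lin (\<lambda>p c. \<Sum>j\<in>J. h j p c) X = (\<Sum>j\<in>J. Lin (h j) X)"
  unfolding Lin_def by (rule sum.swap)

lemma addh_single: "addh (\<lambda>p c. Poly_Mapping.single (g p) c)"
  by (simp add: addh_def single_add)

lemma addh_sum: "(\<And>j. addh (h j)) \<Longrightarrow> addh (\<lambda>p c. \<Sum>j\<in>J. h j p c)"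
  by (simp add: addh_def sum.distrib)

lemma r3_neg: "x \<in> tens3_rel f \<Longrightarrow> - x \<in> tens3_rel f"
  by (metis diff_0 tens3_rel.diff tens3_rel.zero)
lemma r3_add: "x \<in> tens3_rel f \<Longrightarrow> y \<in> tens3_rel f \<Longrightarrow> x + y \<in> tens3_rel f"
  by (metis diff_minus_eq_add r3_neg tens3_rel.diff)
lemma r3_sum: "(\<And>i. i \<in> I \<Longrightarrow> x i \<in> tens3_rel f) \<Longrightarrow> (\<Sum>i\<in>I. x i) \<in> tens3_rel f"
  by (induction I rule: infinite_finite_induct) (auto intro: r3_add tens3_rel.zero)
lemma r2_neg: "x \<in> tens2_rel f \<Longrightarrow> - x \<in> tens2_rel f"
  by (metis diff_0 tens2_rel.diff tens2_rel.zero)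
lemma r2_add: "x \<in> tens2_rel f \<Longrightarrow> y \<in> tens2_rel f \<Longrightarrow> x + y \<in> tens2_rel f"
  by (metis diff_minus_eq_add r2_neg tens2_rel.diff)

lemma teq3_refl: "teq3 f x x" unfolding teq3_def diff_self by (rule tens3_rel.zero)
lemma teq3_sym: "teq3 f x y \<Longrightarrow> teq3 f y x"
  unfolding teq3_def
proof -
  assume "x - y \<in> tens3_rel f"
  then have "- (x - y) \<in> tens3_rel f" by (rule r3_neg)
  then show "y - x \<in> tens3_rel f" unfolding minus_diff_eq .
qed
lemma r3_chain: "x - y \<in> tens3_rel f \<Longrightarrow> y - z \<in> tens3_rel f \<Longrightarrow> x - z \<in> tens3_rel f"
proof -
  assume "x - y \<in> tens3_rel f" "y - z \<in> tens3_rel f"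
  have e: "(x - y) + (y - z) = x - z" by (simp add: algebra_simps)
  from r3_add[OF \<open>x - y \<in> tens3_rel f\<close> \<open>y - z \<in> tens3_rel f\<close>] show ?thesis unfolding e .
qed
lemma teq3_trans: "teq3 f x y \<Longrightarrow> teq3 f y z \<Longrightarrow> teq3 f x z"
  unfolding teq3_def by (rule r3_chain)
lemma r3_sum2: "(\<And>k. k \<in> I \<Longrightarrow> A k - B k \<in> tens3_rel f) \<Longrightarrow> sum A I - sum B I \<in> tens3_rel f"
  unfolding sum_subtractf[symmetric] by (rule r3_sum)
lemma r3_sum3: "(\<And>k. k \<in> I \<Longrightarrow> A k - B k - C k \<in> tens3_rel f) \<Longrightarrow> sum A I - sum B I - sum C I \<in> tens3_rel f"
  unfolding sum_subtractf[symmetric] by (rule r3_sum)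
lemma teq3_sum: "(\<And>i. i \<in> I \<Longrightarrow> teq3 f (x i) (y i)) \<Longrightarrow> teq3 f (\<Sum>i\<in>I. x i) (\<Sum>i\<in>I. y i)"
  unfolding teq3_def by (rule r3_sum2)

lemma gen3_add1_sum: "finite I \<Longrightarrow> teq3 f (gen3 (\<Sum>i\<in>I. a i) c d) (\<Sum>i\<in>I. gen3 (a i) c d)"
proof (induction I rule: finite_induct)
  case empty
  have "gen3 (0+0) c d - gen3 0 c d - gen3 0 c d \<in> tens3_rel f" by (rule tens3_rel.add1)
  then show ?case by (simp add: teq3_def) (metis r3_neg minus_minus)
next
  case (insert x F)
  have "gen3 (a x + sum a F) c d - gen3 (a x) c d - gen3 (sum a F) c d \<in> tens3_rel f" by (rule tens3_rel.add1)
  moreover have "gen3 (sum a F) c d - (\<Sum>i\<in>F. gen3 (a i) c d) \<in> tens3_rel f"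
    using insert by (simp add: teq3_def)
  ultimately have "(gen3 (a x + sum a F) c d - gen3 (a x) c d - gen3 (sum a F) c d) + (gen3 (sum a F) c d - (\<Sum>i\<in>F. gen3 (a i) c d)) \<in> tens3_rel f"
    by (rule r3_add)
  moreover have "(gen3 (a x + sum a F) c d - gen3 (a x) c d - gen3 (sum a F) c d) + (gen3 (sum a F) c d - (\<Sum>i\<in>F. gen3 (a i) c d))
     = gen3 (a x + sum a F) c d - (gen3 (a x) c d + (\<Sum>i\<in>F. gen3 (a i) c d))" by (simp add: algebra_simps)
  ultimately show ?case using insert by (simp add: teq3_def)
qed

lemma Lin_gen2: "addh h \<Longrightarrow> Lin h (gen2 a c) = h (a, c) 1"
  by (simp add: gen2_def Lin_single)
lemma Lin_gen3: "addh h \<Longrightarrow> Lin h (gen3 a c d) = h (a, c, d) 1"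
  by (simp add: gen3_def Lin_single)

definition hR1 :: "'a::ring_1 \<Rightarrow> 'a \<Rightarrow> 'a \<Rightarrow> ('a \<times> 'a) \<Rightarrow> int \<Rightarrow> ('a \<times> 'a \<times> 'a) \<Rightarrow>\<^sub>0 int" where
  "hR1 a0 y0 z0 = (\<lambda>p c. Poly_Mapping.single (a0 * fst p, snd p * y0, z0) c)"

lemma addh_hR1: "addh (hR1 a0 y0 z0)"
  by (simp add: hR1_def addh_single)

lemma R1: "X \<in> tens2_rel f \<Longrightarrow> Lin (hR1 a0 y0 z0) X \<in> tens3_rel f"
proof (induction X rule: tens2_rel.induct)
  case zero then show ?case by (simp add: tens3_rel.zero)
next
  case (diff x y) then show ?case by (simp add: Lin_diff addh_hR1 tens3_rel.diff)
next
  case (addl a a' c)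
  show ?case using tens3_rel.add1[where f=f and a="a0*a" and a'="a0*a'" and c="c*y0" and d=z0]
    by (simp only: Lin_diff[OF addh_hR1] Lin_gen2[OF addh_hR1]) (simp add: hR1_def gen3_def distrib_left)
next
  case (addr a c c')
  show ?case using tens3_rel.add2[where f=f and a="a0*a" and c="c*y0" and c'="c'*y0" and d=z0]
    by (simp only: Lin_diff[OF addh_hR1] Lin_gen2[OF addh_hR1]) (simp add: hR1_def gen3_def distrib_right)
next
  case (bal a b c)
  show ?case using tens3_rel.bal1[where f=f and a="a0*a" and b=b and c="c*y0" and d=z0]
    by (simp only: Lin_diff[OF addh_hR1] Lin_gen2[OF addh_hR1]) (simp add: hR1_def gen3_def mult.assoc)
qed

lemma R1_sum_img: "Lin (hR1 a0 y0 z0) (\<Sum>k<(n::nat). gen2 (x k) (y k)) = (\<Sum>k<n. gen3 (a0 * x k) (y k * y0) z0)"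
  apply (subst Lin_sum[OF _ addh_hR1])
  apply simp
  apply (simp only: Lin_gen2[OF addh_hR1])
  apply (simp add: hR1_def gen3_def)
  done

lemma R1_sum: "teq2 f (\<Sum>k<(n::nat). gen2 (x k) (y k)) (\<Sum>k<n. gen2 (x' k) (y' k)) \<Longrightarrow>
   (\<Sum>k<n. gen3 (a0 * x k) (y k * y0) z0) - (\<Sum>k<n. gen3 (a0 * x' k) (y' k * y0) z0) \<in> tens3_rel f"
proof -
  assume "teq2 f (\<Sum>k<n. gen2 (x k) (y k)) (\<Sum>k<n. gen2 (x' k) (y' k))"
  then have "Lin (hR1 a0 y0 z0) ((\<Sum>k<n. gen2 (x k) (y k)) - (\<Sum>k<n. gen2 (x' k) (y' k))) \<in> tens3_rel f"
    unfolding teq2_def by (rule R1)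
  then show ?thesis by (simp only: Lin_diff[OF addh_hR1] R1_sum_img)
qed

definition hpsi :: "nat \<Rightarrow> (nat \<Rightarrow> 'a::ring_1) \<Rightarrow> (nat \<Rightarrow> 'a) \<Rightarrow> 'a \<Rightarrow> ('a \<times> 'a \<times> 'a) \<Rightarrow> int \<Rightarrow> ('a \<times> 'a \<times> 'a) \<Rightarrow>\<^sub>0 int" where
  "hpsi n s t a0 = (\<lambda>p c. \<Sum>k<n. Poly_Mapping.single (a0 * fst p * s k, t k * fst (snd p), snd (snd p)) c)"

lemma addh_hpsi: "addh (hpsi n s t a0)"
  unfolding hpsi_def addh_def by (simp add: single_add sum.distrib)

lemma psi_resp:
  assumes tinv: "\<forall>b. teq2 f (\<Sum>i<n. gen2 (f b * s i) (t i)) (\<Sum>i<n. gen2 (s i) (t i * f b))"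
  shows "X \<in> tens3_rel f \<Longrightarrow> Lin (hpsi n s t a0) X \<in> tens3_rel f"
proof (induction X rule: tens3_rel.induct)
  case zero then show ?case by (simp add: tens3_rel.zero)
next
  case (diff x y) then show ?case by (simp add: Lin_diff addh_hpsi tens3_rel.diff)
next
  case (add1 a a' c d)
  show ?case
    apply (simp only: Lin_diff[OF addh_hpsi] Lin_gen3[OF addh_hpsi])
    apply (simp only: hpsi_def fst_conv snd_conv)
    apply (rule r3_sum3)
    subgoal for k
      using tens3_rel.add1[where f=f and a="a0*a*s k" and a'="a0*a'*s k" and c="t k * c" and d=d]
      by (simp add: gen3_def distrib_left distrib_right)
    done
next
  case (add2 a c c' d)
  show ?case
    apply (simp only: Lin_diff[OF addh_hpsi] Lin_gen3[OF addh_hpsi])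
    apply (simp only: hpsi_def fst_conv snd_conv)
    apply (rule r3_sum3)
    subgoal for k
      using tens3_rel.add2[where f=f and a="a0*a*s k" and c="t k * c" and c'="t k * c'" and d=d]
      by (simp add: gen3_def distrib_left distrib_right)
    done
next
  case (add3 a c d d')
  show ?case
    apply (simp only: Lin_diff[OF addh_hpsi] Lin_gen3[OF addh_hpsi])
    apply (simp only: hpsi_def fst_conv snd_conv)
    apply (rule r3_sum3)
    subgoal for k
      using tens3_rel.add3[where f=f and a="a0*a*s k" and c="t k * c" and d=d and d'=d']
      by (simp add: gen3_def)
    done
next
  case (bal1 a b c d)
  have "(\<Sum>k<n. gen3 (a0 * a * (f b * s k)) (t k * c) d) - (\<Sum>k<n. gen3 (a0 * a * s k) (t k * f b * c) d) \<in> tens3_rel f"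
    by (rule R1_sum[OF tinv[rule_format, of b]])
  then show ?case
    apply (simp only: Lin_diff[OF addh_hpsi] Lin_gen3[OF addh_hpsi])
    apply (simp only: hpsi_def fst_conv snd_conv)
    apply (simp add: gen3_def mult.assoc)
    done
next
  case (bal2 a c b d)
  show ?case
    apply (simp only: Lin_diff[OF addh_hpsi] Lin_gen3[OF addh_hpsi])
    apply (simp only: hpsi_def fst_conv snd_conv)
    apply (rule r3_sum2)
    subgoal for k
      using tens3_rel.bal2[where f=f and a="a0*a*s k" and c="t k * c" and b=b and d=d]
      by (simp only: gen3_def mult.assoc[of "t k" c "f b", symmetric])
    done
qed

definition hPsi :: "nat \<Rightarrow> (nat \<Rightarrow> 'a::ring_1) \<Rightarrow> (nat \<Rightarrow> 'a) \<Rightarrow> 'a \<Rightarrow> ('a \<times> 'a \<times> 'a) \<Rightarrow> int \<Rightarrow> ('a \<times> 'a \<times> 'a) \<Rightarrow>\<^sub>0 int" where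
  "hPsi n s t m = (\<lambda>p c. \<Sum>k<n. Poly_Mapping.single (m * fst p * m * fst (snd p) * s k, t k, snd (snd p)) c)"

lemma addh_hPsi: "addh (hPsi n s t m)"
  unfolding hPsi_def addh_def by (simp add: single_add sum.distrib)

lemma Psi_resp:
  assumes tinv: "\<forall>b. teq2 f (\<Sum>i<n. gen2 (f b * s i) (t i)) (\<Sum>i<n. gen2 (s i) (t i * f b))"
    and minv: "\<forall>b. f b * m = m * f b"
  shows "X \<in> tens3_rel f \<Longrightarrow> Lin (hPsi n s t m) X \<in> tens3_rel f"
proof (induction X rule: tens3_rel.induct)
  case zero then show ?case by (simp add: tens3_rel.zero)
next
  case (diff x y) then show ?case by (simp add: Lin_diff addh_hPsi tens3_rel.diff)
next
  case (add1 a a' c d)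
  show ?case
    apply (simp only: Lin_diff[OF addh_hPsi] Lin_gen3[OF addh_hPsi])
    apply (simp only: hPsi_def fst_conv snd_conv)
    apply (rule r3_sum3)
    subgoal for k
      using tens3_rel.add1[where f=f and a="m*a*m*c*s k" and a'="m*a'*m*c*s k" and c="t k" and d=d]
      by (simp add: gen3_def distrib_left distrib_right)
    done
next
  case (add2 a c c' d)
  show ?case
    apply (simp only: Lin_diff[OF addh_hPsi] Lin_gen3[OF addh_hPsi])
    apply (simp only: hPsi_def fst_conv snd_conv)
    apply (rule r3_sum3)
    subgoal for k
      using tens3_rel.add1[where f=f and a="m*a*m*c*s k" and a'="m*a*m*c'*s k" and c="t k" and d=d]
      by (simp add: gen3_def distrib_left distrib_right)
    done
next
  case (add3 a c d d')
  show ?case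
    apply (simp only: Lin_diff[OF addh_hPsi] Lin_gen3[OF addh_hPsi])
    apply (simp only: hPsi_def fst_conv snd_conv)
    apply (rule r3_sum3)
    subgoal for k
      using tens3_rel.add3[where f=f and a="m*a*m*c*s k" and c="t k" and d=d and d'=d']
      by (simp add: gen3_def)
    done
next
  case (bal1 a b c d)
  have e1: "\<And>k. m*(a*f b)*m*c*s k = m*a*m*(f b*c)*s k"
    by (metis mult.assoc minv)
  show ?case
    apply (simp only: Lin_diff[OF addh_hPsi] Lin_gen3[OF addh_hPsi])
    apply (simp only: hPsi_def fst_conv snd_conv)
    unfolding e1 diff_self by (rule tens3_rel.zero)
next
  case (bal2 a c b d)
  have h1: "(\<Sum>k<n. gen3 (m*a*m*c * (f b * s k)) (t k * 1) d) - (\<Sum>k<n. gen3 (m*a*m*c * s k) (t k * f b * 1) d) \<in> tens3_rel f"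
    by (rule R1_sum[OF tinv[rule_format, of b]])
  have h2: "(\<Sum>k<n. gen3 (m*a*m*c * s k) (t k * f b) d) - (\<Sum>k<n. gen3 (m*a*m*c * s k) (t k) (f b * d)) \<in> tens3_rel f"
    apply (rule r3_sum2)
    subgoal for k by (rule tens3_rel.bal2)
    done
  have "(\<Sum>k<n. gen3 (m*a*m*c * (f b * s k)) (t k) d) - (\<Sum>k<n. gen3 (m*a*m*c * s k) (t k) (f b * d)) \<in> tens3_rel f"
  proof -
    have h1': "(\<Sum>k<n. gen3 (m*a*m*c * (f b * s k)) (t k) d) - (\<Sum>k<n. gen3 (m*a*m*c * s k) (t k * f b) d) \<in> tens3_rel f"
      using h1 unfolding mult_1_right .
    show ?thesis by (rule r3_chain[OF h1' h2])
  qed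
  moreover have e: "\<And>k. m*a*m*(c*f b)*s k = m*a*m*c*(f b*s k)"
    by (metis mult.assoc)
  ultimately show ?case
    apply (simp only: Lin_diff[OF addh_hPsi] Lin_gen3[OF addh_hPsi])
    apply (simp only: hPsi_def fst_conv snd_conv)
    unfolding e gen3_def .
qed

lemma phi_resp:
  "X \<in> tens2_rel f \<Longrightarrow> Lin (\<lambda>p c. \<Sum>j<n. hR1 m (s j) (t j) p c) X \<in> tens3_rel f"
  unfolding Lin_hsum by (rule r3_sum) (erule R1)




definition hphi :: "nat \<Rightarrow> (nat \<Rightarrow> 'a::ring_1) \<Rightarrow> (nat \<Rightarrow> 'a) \<Rightarrow> 'a \<Rightarrow> ('a \<times> 'a) \<Rightarrow> int \<Rightarrow> ('a \<times> 'a \<times> 'a) \<Rightarrow>\<^sub>0 int" where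
  "hphi n s t m = (\<lambda>p c. \<Sum>j<n. hR1 m (s j) (t j) p c)"

lemma addh_hphi: "addh (hphi n s t m)"
  unfolding hphi_def hR1_def addh_def by (simp add: single_add sum.distrib)

lemma phi_resp2: "X \<in> tens2_rel f \<Longrightarrow> Lin (hphi n s t m) X \<in> tens3_rel f"
  unfolding hphi_def by (rule phi_resp)

lemma counit_Lin: "counit_t u X = Lin (\<lambda>p c. of_int c * (fst p * u * snd p)) X"
  by (simp add: counit_t_def Lin_def)

lemma addh_counit: "addh (\<lambda>p c. (of_int c :: 'a::ring_1) * (fst p * u * snd p))"
  by (simp add: addh_def distrib_right)

lemma comult_Lin: "comult_t m n s t X = Lin (\<lambda>p c. \<Sum>j<n. Poly_Mapping.single (fst p * m * s j, t j, snd p) c) X"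
  by (simp add: comult_t_def Lin_def)

lemma addh_comult: "addh (\<lambda>p c. \<Sum>j<n. Poly_Mapping.single (fst p * m * s j, t j, snd p) c)"
  by (simp add: addh_def single_add sum.distrib)

lemma tensA_Lin: "tensA X Y = Lin (\<lambda>p c. Lin (\<lambda>q d. Poly_Mapping.single (fst p, snd p * fst q, snd q) (c * d)) Y) X"
  by (simp add: tensA_def Lin_def)

lemma addh_tensA: "addh (\<lambda>p c. Lin (\<lambda>q d. Poly_Mapping.single (fst p, snd p * fst q, snd q) (c * d)) Y)"
  by (simp add: addh_def Lin_def distrib_right single_add sum.distrib)

lemma addh_tensA_in: "addh (\<lambda>q d. Poly_Mapping.single (x, y * fst q, snd q) (c * d))"
  by (simp add: addh_def distrib_left single_add)

lemma tensA_sums: "tensA (\<Sum>i<(n::nat). gen2 (a i) (b i)) (\<Sum>j<(n'::nat). gen2 (c j) (d j))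
   = (\<Sum>i<n. \<Sum>j<n'. gen3 (a i) (b i * c j) (d j))"
  unfolding tensA_Lin
  apply (simp only: Lin_sum[OF finite_lessThan addh_tensA] Lin_gen2[OF addh_tensA])
  apply (simp only: fst_conv snd_conv Lin_sum[OF finite_lessThan addh_tensA_in] Lin_gen2[OF addh_tensA_in])
  apply (simp add: gen3_def)
  done

theorem lemma5p2:
  fixes \<iota>A :: "'k::comm_ring_1 \<Rightarrow> 'a::ring_1" and \<iota>B :: "'k \<Rightarrow> 'b::ring_1"
    and f :: "'b \<Rightarrow> 'a"
    and n :: nat and s t :: "nat \<Rightarrow> 'a" and m u :: 'a
  assumes kA: "is_alg_struct \<iota>A" and kB: "is_alg_struct \<iota>B"
    and f_hom: "is_ring_hom f" and f_k: "\<forall>c. f (\<iota>B c) = \<iota>A c"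
    and t_inv: "\<forall>b. teq2 f (\<Sum>i<n. gen2 (f b * s i) (t i)) (\<Sum>i<n. gen2 (s i) (t i * f b))"
    and m_inv: "\<forall>b. f b * m = m * f b"
    and u_inv: "\<forall>b. f b * u = u * f b"
    and a1: "(\<Sum>i<n. s i * t i) = 1"
    and a2: "teq3 f (\<Sum>i<n. \<Sum>j<n. gen3 (s i) (t i * s j) (t j)) (\<Sum>i<n. gen3 (s i) 1 (t i))"
    and b: "teq2 f (\<Sum>i<n. gen2 (s i) (t i * m)) (\<Sum>i<n. \<Sum>j<n. gen2 (m * s i * s j) (t j * t i))"
    and c: "teq2 f (\<Sum>i<n. gen2 (s i) (t i * u)) (gen2 u 1)"
    and d: "m * m = (\<Sum>i<n. m * s i * m * t i)"
    and e1: "m * u = 1" and e2: "(\<Sum>i<n. m * s i * u * t i) = 1"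
  shows "counit_t u (\<Sum>i<n. gen2 (m * s i) (t i)) = 1
    \<and> teq3 f (comult_t m n s t (\<Sum>i<n. gen2 (m * s i) (t i)))
             (tensA (\<Sum>i<n. gen2 (m * s i) (t i)) (\<Sum>i<n. gen2 (m * s i) (t i)))"
proof -
  let ?R3 = "tens3_rel f"
  define MT where "MT = (\<Sum>i<n. gen2 (m * s i) (t i))"
  have P1: "counit_t u MT = 1"
    unfolding counit_Lin MT_def
    apply (simp only: Lin_sum[OF finite_lessThan addh_counit] Lin_gen2[OF addh_counit])
    apply (simp add: e2)
    done
  have C: "comult_t m n s t MT = (\<Sum>i<n. \<Sum>j<n. gen3 (m * s i * m * s j) (t j) (t i))"
    unfolding comult_Lin MT_def
    apply (simp only: Lin_sum[OF finite_lessThan addh_comult] Lin_gen2[OF addh_comult])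
    apply (simp add: gen3_def)
    done
  have T: "tensA MT MT = (\<Sum>i<n. \<Sum>j<n. gen3 (m * s i) (t i * (m * s j)) (t j))"
    unfolding MT_def by (rule tensA_sums)
  define LHSa where "LHSa = (\<Sum>i<n. \<Sum>j<n. gen3 (s i) (t i * s j) (t j))"
  define RHSa where "RHSa = (\<Sum>i<n. gen3 (s i) 1 (t i))"
  define LHSb where "LHSb = (\<Sum>i<n. gen2 (s i) (t i * m))"
  define RHSb where "RHSb = (\<Sum>i<n. \<Sum>j<n. gen2 (m * s i * s j) (t j * t i))"
  define M where "M = (\<Sum>i<n. \<Sum>k<n. gen3 (m * m * s i * s k) (t k) (t i))"
  have Fb: "Lin (hphi n s t m) LHSb - Lin (hphi n s t m) RHSb \<in> ?R3"
    using phi_resp2[OF b[unfolded teq2_def]] unfolding LHSb_def RHSb_def Lin_diff[OF addh_hphi] .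
  have Fpsi: "Lin (hpsi n s t (m*m)) LHSa - Lin (hpsi n s t (m*m)) RHSa \<in> ?R3"
    using psi_resp[OF t_inv a2[unfolded teq3_def]] unfolding LHSa_def RHSa_def Lin_diff[OF addh_hpsi] .
  have FPsi: "Lin (hPsi n s t m) LHSa - Lin (hPsi n s t m) RHSa \<in> ?R3"
    using Psi_resp[OF t_inv m_inv a2[unfolded teq3_def]] unfolding LHSa_def RHSa_def Lin_diff[OF addh_hPsi] .
  have I1: "Lin (hphi n s t m) LHSb = tensA MT MT"
    unfolding T LHSb_def
    apply (simp only: Lin_sum[OF finite_lessThan addh_hphi] Lin_gen2[OF addh_hphi])
    apply (simp add: hphi_def hR1_def gen3_def mult.assoc)
    done
  have I2: "Lin (hphi n s t m) RHSb = Lin (hpsi n s t (m*m)) LHSa"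
    unfolding RHSb_def LHSa_def
    apply (simp only: Lin_sum[OF finite_lessThan addh_hphi] Lin_gen2[OF addh_hphi]
        Lin_sum[OF finite_lessThan addh_hpsi] Lin_gen3[OF addh_hpsi])
    apply (simp add: hphi_def hR1_def hpsi_def gen3_def mult.assoc)
    apply (rule sum.cong[OF refl])
    apply (rule sum.swap)
    done
  have I3: "Lin (hpsi n s t (m*m)) RHSa = M"
    unfolding RHSa_def M_def
    apply (simp only: Lin_sum[OF finite_lessThan addh_hpsi] Lin_gen3[OF addh_hpsi])
    apply (simp add: hpsi_def gen3_def)
    done
  have I4: "Lin (hPsi n s t m) RHSa = comult_t m n s t MT"
    unfolding RHSa_def C
    apply (simp only: Lin_sum[OF finite_lessThan addh_hPsi] Lin_gen3[OF addh_hPsi])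
    apply (simp add: hPsi_def gen3_def)
    done
  have I5: "Lin (hPsi n s t m) LHSa = (\<Sum>j<n. \<Sum>k<n. \<Sum>i<n. gen3 (m * s i * m * (t i * s j) * s k) (t k) (t j))"
    unfolding LHSa_def
    apply (simp only: Lin_sum[OF finite_lessThan addh_hPsi] Lin_gen3[OF addh_hPsi])
    apply (simp add: hPsi_def gen3_def)
    apply (rule trans[OF sum.swap])
    apply (rule sum.cong[OF refl])
    apply (rule sum.swap)
    done
  have I6: "teq3 f (\<Sum>j<n. \<Sum>k<n. \<Sum>i<n. gen3 (m * s i * m * (t i * s j) * s k) (t k) (t j)) M"
  proof -
    have "teq3 f (\<Sum>j<n. \<Sum>k<n. \<Sum>i<n. gen3 (m * s i * m * (t i * s j) * s k) (t k) (t j))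
                 (\<Sum>j<n. \<Sum>k<n. gen3 (m * m * s j * s k) (t k) (t j))"
    proof (rule teq3_sum, rule teq3_sum)
      fix j k
      have e: "(\<Sum>i<n. m * s i * m * (t i * s j) * s k) = m * m * s j * s k"
      proof -
        have "(\<Sum>i<n. m * s i * m * (t i * s j) * s k) = (\<Sum>i<n. m * s i * m * t i) * (s j * s k)"
          by (simp add: sum_distrib_right mult.assoc)
        also have "\<dots> = m * m * s j * s k" unfolding d[symmetric] by (simp add: mult.assoc)
        finally show ?thesis .
      qed
      show "teq3 f (\<Sum>i<n. gen3 (m * s i * m * (t i * s j) * s k) (t k) (t j)) (gen3 (m * m * s j * s k) (t k) (t j))"
        using teq3_sym[OF gen3_add1_sum[of "{..<n}" f "\<lambda>i. m * s i * m * (t i * s j) * s k" "t k" "t j"]]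
        unfolding e by simp
    qed
    moreover have "(\<Sum>j<n. \<Sum>k<n. gen3 (m * m * s j * s k) (t k) (t j)) = M"
      unfolding M_def ..
    ultimately show ?thesis by simp
  qed
  have P2: "teq3 f (comult_t m n s t MT) (tensA MT MT)"
  proof -
    have s1: "teq3 f (comult_t m n s t MT) (Lin (hPsi n s t m) LHSa)"
      unfolding I4[symmetric] by (rule teq3_sym) (unfold teq3_def, rule FPsi)
    have s2: "teq3 f (Lin (hPsi n s t m) LHSa) M"
      unfolding I5 by (rule I6)
    have s3: "teq3 f M (Lin (hpsi n s t (m*m)) LHSa)"
      unfolding I3[symmetric] by (rule teq3_sym) (unfold teq3_def, rule Fpsi)
    have s4: "teq3 f (Lin (hpsi n s t (m*m)) LHSa) (tensA MT MT)"
      unfolding I2[symmetric] I1[symmetric] by (rule teq3_sym) (unfold teq3_def, rule Fb)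
    show ?thesis by (rule teq3_trans[OF teq3_trans[OF teq3_trans[OF s1 s2] s3] s4])
  qed
  show ?thesis using P1 P2 unfolding MT_def by simp
qed


end
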